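(* Let $\mathbb{F}\in\{\mathbb{R},\mathbb{C}\}$, let $N\ge 2$, $M\ge 2$ and $1\le Q\le M$ be integers, write $\mathcal{M}=\{1,\dots,M\}$, let $0\le\epsilon\le 1$, and let $\mathbf{H}_1,\dots,\mathbf{H}_M$ be $N\times N$ positive semidefinite matrices (real symmetric if $\mathbb{F}=\mathbb{R}$, complex Hermitian if $\mathbb{F}=\mathbb{C}$). Consider the problem (SDP1): minimize $\mathrm{Tr}[\mathbf{X}^{(2)}]$ over a real symmetric $(M+1)\times(M+1)$ matrix $\mathbf{X}^{(1)}$ and an $N\times N$ matrix $\mathbf{X}^{(2)}$ (real symmetric if $\mathbb{F}=\mathbb{R}$, Hermitian if $\mathbb{F}=\mathbb{C}$) subject to $\mathrm{Tr}[\mathbf{H}_i\mathbf{X}^{(2)}]\ge \frac{1+\mathbf{X}^{(1)}[i,M+1]}{2}+\frac{1-\mathbf{X}^{(1)}[i,M+1]}{2}\,\epsilon$ for all $i\in\mathcal{M}$, $\sum_{i\in\mathcal{M}}\mathbf{X}^{(1)}[i,M+1]=2Q-M$, $\mathbf{X}^{(1)}[i,i]=1$ for $i=1,\dots,M+1$, $\mathbf{X}^{(1)}\succeq 0$, $\mathbf{X}^{(2)}\succeq 0$. Consider also the problem (SDP2): minimize $\mathrm{Tr}[\mathbf{X}^{(2)}]$ over $\boldsymbol{\beta}=(\beta_1,\dots,\beta_M)^T\in\mathbb{R}^M$ and an $N\times N$ matrix $\mathbf{X}^{(2)}$ (real symmetric if $\mathbb{F}=\mathbb{R}$, Hermitian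 if $\mathbb{F}=\mathbb{C}$) subject to $\mathrm{Tr}[\mathbf{H}_i\mathbf{X}^{(2)}]\ge \beta_i+(1-\beta_i)\epsilon$ for all $i\in\mathcal{M}$, $\sum_{i\in\mathcal{M}}\beta_i=Q$, $0\le\beta_i\le 1$ for all $i\in\mathcal{M}$, $\mathbf{X}^{(2)}\succeq 0$. If $(\tilde{\mathbf{X}}^{(1)},\tilde{\mathbf{X}}^{(2)})$ is an optimal solution of (SDP1), then $(\tilde{\boldsymbol{\beta}},\tilde{\mathbf{X}}^{(2)})$ with $\tilde{\boldsymbol{\beta}}[i]=\frac12+\frac12\tilde{\mathbf{X}}^{(1)}[i,M+1]$, $i\in\mathcal{M}$, is an optimal solution of (SDP2). Conversely, if $(\bar{\boldsymbol{\beta}},\bar{\mathbf{X}}^{(2)})$ is an optimal solution of (SDP2), then there is a real symmetric matrix $\mathbf{X}^{(1)}$ with $\mathbf{X}^{(1)}[i,M+1]=2\bar{\boldsymbol{\beta}}[i]-1$ for all $i\in\mathcal{M}$ such that $(\mathbf{X}^{(1)},\bar{\mathbf{X}}^{(2)})$ is an optimal solution of (SDP1).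
   Context: $\mathbf{X}[i,j]$ denotes the $(i,j)$ entry of a matrix, $\mathbf{X}\succeq 0$ means positive semidefinite, and $\mathrm{Tr}$ is the trace. (SDP1) is the semidefinite relaxation of a lifted reformulation of the mixed binary problem "minimize $\|\mathbf{w}\|^2$ over $\mathbf{w}\in\mathbb{F}^N$, $\boldsymbol\beta\in\{0,1\}^M$ subject to $\mathbf{w}^H\mathbf{H}_i\mathbf{w}\ge\beta_i+(1-\beta_i)\epsilon$, $\sum_i\beta_i=Q$", in which the binary variables are encoded as $\alpha_i=2\beta_i-1\in\{-1,1\}$ together with an auxiliary variable $\ell\in\{-1,1\}$ occupying index $M+1$. *)

theory Defs
  imports "Jordan_Normal_Form.Matrix" "Jordan_Normal_Form.Conjugate"
begin

text \<open>Matrices over F are JNF matrices over a type 'a that is instantiated with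
  real (F = R) or complex (F = C).  The complex numbers carry the partial order of
  HOL-Library.Complex_Order (z \<le> w iff Re z \<le> Re w and Im z = Im w), so
  "0 \<le> z" for complex z means that z is a nonnegative real number.
  Indices are 0-based: paper index i in {1..M} is i-1 in {0..<M}, and the
  auxiliary index M+1 is M.\<close>

definition mtrace :: "'a::comm_ring_1 mat \<Rightarrow> 'a" where
  "mtrace A = (\<Sum>i\<in>{0..<dim_row A}. A $$ (i, i))"

text \<open>Hermitian (= real symmetric when 'a = real, since conjugation is the identity).\<close>
definition hermitian_mat :: "nat \<Rightarrow> 'a::conjugatable_ring mat \<Rightarrow> bool" where
  "hermitian_mat n A \<longleftrightarrow> A \<in> carrier_mat n n \<and>
     (\<forall>i<n. \<forall>j<n. A $$ (i, j) = conjugate (A $$ (j, i)))"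

definition psd_mat :: "nat \<Rightarrow> 'a::conjugatable_ordered_field mat \<Rightarrow> bool" where
  "psd_mat n A \<longleftrightarrow> hermitian_mat n A \<and>
     (\<forall>x \<in> carrier_vec n. 0 \<le> (A *\<^sub>v x) \<bullet>c x)"

definition sdp1_feasible ::
  "nat \<Rightarrow> nat \<Rightarrow> nat \<Rightarrow> real \<Rightarrow> (nat \<Rightarrow> 'a::{conjugatable_ordered_field,real_algebra_1} mat)
   \<Rightarrow> real mat \<Rightarrow> 'a mat \<Rightarrow> bool" where
  "sdp1_feasible N M Q \<epsilon> H X1 X2 \<longleftrightarrow>
     hermitian_mat (M + 1) X1 \<and> hermitian_mat N X2 \<and>
     (\<forall>i<M. mtrace (H i * X2) \<ge>
        of_real ((1 + X1 $$ (i, M)) / 2 + (1 - X1 $$ (i, M)) / 2 * \<epsilon>)) \<and>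
     (\<Sum>i<M. X1 $$ (i, M)) = 2 * real Q - real M \<and>
     (\<forall>i<M + 1. X1 $$ (i, i) = 1) \<and>
     psd_mat (M + 1) X1 \<and> psd_mat N X2"

definition sdp1_optimal ::
  "nat \<Rightarrow> nat \<Rightarrow> nat \<Rightarrow> real \<Rightarrow> (nat \<Rightarrow> 'a::{conjugatable_ordered_field,real_algebra_1} mat)
   \<Rightarrow> real mat \<Rightarrow> 'a mat \<Rightarrow> bool" where
  "sdp1_optimal N M Q \<epsilon> H X1 X2 \<longleftrightarrow> sdp1_feasible N M Q \<epsilon> H X1 X2 \<and>
     (\<forall>Y1 Y2. sdp1_feasible N M Q \<epsilon> H Y1 Y2 \<longrightarrow> mtrace X2 \<le> mtrace Y2)"

definition sdp2_feasible ::
  "nat \<Rightarrow> nat \<Rightarrow> nat \<Rightarrow> real \<Rightarrow> (nat \<Rightarrow> 'a::{conjugatable_ordered_field,real_algebra_1} mat)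
   \<Rightarrow> real vec \<Rightarrow> 'a mat \<Rightarrow> bool" where
  "sdp2_feasible N M Q \<epsilon> H \<beta> X2 \<longleftrightarrow>
     \<beta> \<in> carrier_vec M \<and> hermitian_mat N X2 \<and>
     (\<forall>i<M. mtrace (H i * X2) \<ge> of_real (\<beta> $ i + (1 - \<beta> $ i) * \<epsilon>)) \<and>
     (\<Sum>i<M. \<beta> $ i) = real Q \<and>
     (\<forall>i<M. 0 \<le> \<beta> $ i \<and> \<beta> $ i \<le> 1) \<and>
     psd_mat N X2"

definition sdp2_optimal ::
  "nat \<Rightarrow> nat \<Rightarrow> nat \<Rightarrow> real \<Rightarrow> (nat \<Rightarrow> 'a::{conjugatable_ordered_field,real_algebra_1} mat)
   \<Rightarrow> real vec \<Rightarrow> 'a mat \<Rightarrow> bool" where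
  "sdp2_optimal N M Q \<epsilon> H \<beta> X2 \<longleftrightarrow> sdp2_feasible N M Q \<epsilon> H \<beta> X2 \<and>
     (\<forall>\<gamma> Y2. sdp2_feasible N M Q \<epsilon> H \<gamma> Y2 \<longrightarrow> mtrace X2 \<le> mtrace Y2)"

definition lemma2p1_claim :: "'a::{conjugatable_ordered_field,real_algebra_1} itself \<Rightarrow> bool" where
  "lemma2p1_claim _ \<longleftrightarrow>
   (\<forall>(N::nat) (M::nat) (Q::nat) (\<epsilon>::real) (H :: nat \<Rightarrow> 'a mat).
      N \<ge> 2 \<longrightarrow> M \<ge> 2 \<longrightarrow> 1 \<le> Q \<longrightarrow> Q \<le> M \<longrightarrow> 0 \<le> \<epsilon> \<longrightarrow> \<epsilon> \<le> 1 \<longrightarrow>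
      (\<forall>i<M. psd_mat N (H i)) \<longrightarrow>
      (\<forall>X1 X2. sdp1_optimal N M Q \<epsilon> H X1 X2 \<longrightarrow>
         sdp2_optimal N M Q \<epsilon> H (vec M (\<lambda>i. 1/2 + 1/2 * X1 $$ (i, M))) X2) \<and>
      (\<forall>\<beta> X2. sdp2_optimal N M Q \<epsilon> H \<beta> X2 \<longrightarrow>
         (\<exists>X1. hermitian_mat (M + 1) X1 \<and> (\<forall>i<M. X1 $$ (i, M) = 2 * \<beta> $ i - 1) \<and>
               sdp1_optimal N M Q \<epsilon> H X1 X2)))"

end

theory Submission
  imports Defs
begin

lemma quad_real:
  fixes A :: "real mat"
  assumes "A \<in> carrier_mat n n" "x \<in> carrier_vec n"
  shows "(A *\<^sub>v x) \<bullet>c x = (\<Sum>k\<in>{0..<n}. (\<Sum>j\<in>{0..<n}. A $$ (k,j) * x $ j) * x $ k)"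
  using assms by (simp add: scalar_prod_def row_def)

lemma two_sum:
  fixes f :: "nat \<Rightarrow> real"
  assumes "i < M"
  shows "(\<Sum>j\<in>{0..<M+1}. f j * (if j = i then 1 else if j = M then s else 0)) = f i + s * f M"
proof -
  have "(\<Sum>j\<in>{0..<M+1}. f j * (if j = i then 1 else if j = M then s else 0))
     = (\<Sum>j\<in>{0..<M+1}. (if j = i then f i else 0) + (if j = M then s * f M else 0))"
    using assms by (intro sum.cong) auto
  also have "\<dots> = f i + s * f M" using assms by (simp add: sum.distrib)
  finally show ?thesis .
qed

lemma diag_bound:
  fixes A :: "real mat"
  assumes "psd_mat (M+1) A" "\<forall>i<M+1. A $$ (i,i) = 1" "i < M"
  shows "-1 \<le> A $$ (i,M) \<and> A $$ (i,M) \<le> 1"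
proof -
  have car: "A \<in> carrier_mat (M+1) (M+1)" and sym: "A $$ (M,i) = A $$ (i,M)"
    and pos: "\<And>x. x \<in> carrier_vec (M+1) \<Longrightarrow> 0 \<le> (A *\<^sub>v x) \<bullet>c x"
    using assms unfolding psd_mat_def hermitian_mat_def by auto
  have q: "0 \<le> 2 + 2 * s * A $$ (i,M)" if "s * s = 1" for s :: real
  proof -
    define x where "x = vec (M+1) (\<lambda>k. if k = i then 1 else if k = M then s else (0::real))"
    have xc: "x \<in> carrier_vec (M+1)" unfolding x_def by simp
    have "(A *\<^sub>v x) \<bullet>c x = (\<Sum>k\<in>{0..<M+1}. (\<Sum>j\<in>{0..<M+1}. A $$ (k,j) * x $ j) * x $ k)"
      by (rule quad_real[OF car xc])
    also have "\<dots> = (\<Sum>k\<in>{0..<M+1}. (A $$ (k,i) + s * A $$ (k,M)) * (if k = i then 1 else if k = M then s else 0))"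
      apply (intro sum.cong refl)
      apply (subst two_sum[symmetric, OF assms(3)])
      unfolding x_def by (intro arg_cong2[where f="(*)"] sum.cong) auto
    also have "\<dots> = (A $$ (i,i) + s * A $$ (i,M)) + s * (A $$ (M,i) + s * A $$ (M,M))"
      using two_sum[OF assms(3), of "\<lambda>k. A $$ (k,i) + s * A $$ (k,M)" s] by simp
    also have "\<dots> = 2 + 2 * s * A $$ (i,M)"
      using assms(2,3) sym that by (simp add: algebra_simps)
    finally show ?thesis using pos[OF xc] by simp
  qed
  from q[of 1] q[of "-1"] show ?thesis by auto
qed

definition mkX :: "nat \<Rightarrow> (nat \<Rightarrow> real) \<Rightarrow> real mat" where
  "mkX n a = mat n n (\<lambda>(i,j). a i * a j + (if i = j then 1 - (a i)^2 else 0))"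

lemma mkX_psd:
  assumes "\<And>k. k < n \<Longrightarrow> (a k)^2 \<le> 1"
  shows "psd_mat n (mkX n a)"
proof -
  have car: "mkX n a \<in> carrier_mat n n" unfolding mkX_def by simp
  have herm: "hermitian_mat n (mkX n a)"
    unfolding hermitian_mat_def mkX_def by auto
  have "0 \<le> (mkX n a *\<^sub>v x) \<bullet>c x" if xc: "x \<in> carrier_vec n" for x
  proof -
    define S where "S = (\<Sum>j\<in>{0..<n}. a j * x $ j)"
    have inner: "(\<Sum>j\<in>{0..<n}. mkX n a $$ (k,j) * x $ j) = a k * S + (1 - (a k)^2) * x $ k"
      if k: "k < n" for k
    proof -
      have "(\<Sum>j\<in>{0..<n}. mkX n a $$ (k,j) * x $ j)
          = (\<Sum>j\<in>{0..<n}. a k * (a j * x $ j) + (if j = k then (1 - (a k)^2) * x $ k else 0))"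
        using k by (intro sum.cong) (auto simp: mkX_def algebra_simps)
      also have "\<dots> = a k * S + (1 - (a k)^2) * x $ k"
        using k by (simp add: sum.distrib sum_distrib_left S_def)
      finally show ?thesis .
    qed
    have "(mkX n a *\<^sub>v x) \<bullet>c x = (\<Sum>k\<in>{0..<n}. (a k * S + (1 - (a k)^2) * x $ k) * x $ k)"
      unfolding quad_real[OF car xc] by (intro sum.cong refl) (simp add: inner)
    also have "\<dots> = S * S + (\<Sum>k\<in>{0..<n}. (1 - (a k)^2) * (x $ k)^2)"
    proof -
      have "(\<Sum>k\<in>{0..<n}. (a k * S + (1 - (a k)^2) * x $ k) * x $ k)
          = (\<Sum>k\<in>{0..<n}. S * (a k * x $ k) + (1 - (a k)^2) * (x $ k)^2)"
        by (intro sum.cong refl) (simp add: algebra_simps power2_eq_square)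
      also have "\<dots> = S * S + (\<Sum>k\<in>{0..<n}. (1 - (a k)^2) * (x $ k)^2)"
        by (simp add: sum.distrib sum_distrib_left[symmetric] S_def)
      finally show ?thesis .
    qed
    also have "\<dots> \<ge> 0"
      using assms by (intro add_nonneg_nonneg sum_nonneg zero_le_square mult_nonneg_nonneg) auto
    finally show ?thesis .
  qed
  with herm show ?thesis unfolding psd_mat_def by auto
qed

lemma fwd:
  fixes H :: "nat \<Rightarrow> 'a::{conjugatable_ordered_field,real_algebra_1} mat"
  assumes "sdp1_feasible N M Q \<epsilon> H X1 X2"
  shows "sdp2_feasible N M Q \<epsilon> H (vec M (\<lambda>i. 1/2 + 1/2 * X1 $$ (i, M))) X2"
proof -
  have F: "hermitian_mat N X2" "\<forall>i<M. mtrace (H i * X2) \<ge>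
        of_real ((1 + X1 $$ (i, M)) / 2 + (1 - X1 $$ (i, M)) / 2 * \<epsilon>)"
    "(\<Sum>i<M. X1 $$ (i, M)) = 2 * real Q - real M"
     "\<forall>i<M + 1. X1 $$ (i, i) = 1" "psd_mat (M + 1) X1" "psd_mat N X2"
    using assms unfolding sdp1_feasible_def by auto
  have tr: "\<forall>i<M. mtrace (H i * X2) \<ge> of_real ((1/2 + 1/2 * X1 $$ (i, M)) + (1 - (1/2 + 1/2 * X1 $$ (i, M))) * \<epsilon>)"
  proof (intro allI impI)
    fix i assume "i < M"
    have "(1/2 + 1/2 * X1 $$ (i, M)) + (1 - (1/2 + 1/2 * X1 $$ (i, M))) * \<epsilon>
       = (1 + X1 $$ (i, M)) / 2 + (1 - X1 $$ (i, M)) / 2 * \<epsilon>" by (simp add: field_simps)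
    then show "mtrace (H i * X2) \<ge> of_real ((1/2 + 1/2 * X1 $$ (i, M)) + (1 - (1/2 + 1/2 * X1 $$ (i, M))) * \<epsilon>)"
      using F(2) \<open>i < M\<close> by simp
  qed
  have sm: "(\<Sum>i<M. 1/2 + 1/2 * X1 $$ (i, M)) = real Q"
    using F(3) by (simp add: sum.distrib sum_divide_distrib[symmetric] field_simps)
  have bd: "\<forall>i<M. 0 \<le> 1/2 + 1/2 * X1 $$ (i, M) \<and> 1/2 + 1/2 * X1 $$ (i, M) \<le> 1"
    using diag_bound[OF F(5) F(4)] by fastforce
  show ?thesis unfolding sdp2_feasible_def using F tr sm bd by simp
qed

lemma bwd:
  fixes H :: "nat \<Rightarrow> 'a::{conjugatable_ordered_field,real_algebra_1} mat"
  assumes "sdp2_feasible N M Q \<epsilon> H \<beta> X2"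
  defines "X \<equiv> mkX (M+1) (\<lambda>k. if k < M then 2 * \<beta> $ k - 1 else 1)"
  shows "sdp1_feasible N M Q \<epsilon> H X X2 \<and> hermitian_mat (M + 1) X \<and> (\<forall>i<M. X $$ (i, M) = 2 * \<beta> $ i - 1)"
proof -
  have F: "hermitian_mat N X2"
    "\<forall>i<M. mtrace (H i * X2) \<ge> of_real (\<beta> $ i + (1 - \<beta> $ i) * \<epsilon>)"
    "(\<Sum>i<M. \<beta> $ i) = real Q" "\<forall>i<M. 0 \<le> \<beta> $ i \<and> \<beta> $ i \<le> 1" "psd_mat N X2"
    using assms(1) unfolding sdp2_feasible_def by auto
  have ent: "\<forall>i<M. X $$ (i, M) = 2 * \<beta> $ i - 1"
    unfolding X_def mkX_def by simp
  have dg: "\<forall>i<M + 1. X $$ (i, i) = 1" unfolding X_def mkX_def by (simp add: power2_eq_square)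
  have psd: "psd_mat (M+1) X" unfolding X_def
  proof (rule mkX_psd)
    fix k assume "k < M + 1"
    show "(if k < M then 2 * \<beta> $ k - 1 else 1)\<^sup>2 \<le> (1::real)"
    proof (cases "k < M")
      case True
      then have "0 \<le> \<beta> $ k" "\<beta> $ k \<le> 1" using F(4) by auto
      then have "(2 * \<beta> $ k - 1)^2 \<le> 1" using mult_nonneg_nonpos[of "\<beta> $ k" "\<beta> $ k - 1"]
        by (simp add: power2_eq_square algebra_simps)
      then show ?thesis using True by simp
    qed simp
  qed
  then have herm: "hermitian_mat (M+1) X" unfolding psd_mat_def by simp
  have tr: "\<forall>i<M. mtrace (H i * X2) \<ge> of_real ((1 + X $$ (i, M)) / 2 + (1 - X $$ (i, M)) / 2 * \<epsilon>)"
  proof (intro allI impI)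
    fix i assume i: "i < M"
    have e: "X $$ (i, M) = 2 * \<beta> $ i - 1" using ent i by simp
    have "(1 + X $$ (i, M)) / 2 + (1 - X $$ (i, M)) / 2 * \<epsilon> = \<beta> $ i + (1 - \<beta> $ i) * \<epsilon>"
      unfolding e by (simp add: field_simps)
    then show "mtrace (H i * X2) \<ge> of_real ((1 + X $$ (i, M)) / 2 + (1 - X $$ (i, M)) / 2 * \<epsilon>)"
      using F(2) i by simp
  qed
  have sm: "(\<Sum>i<M. X $$ (i, M)) = 2 * real Q - real M"
  proof -
    have "(\<Sum>i<M. X $$ (i, M)) = (\<Sum>i<M. 2 * \<beta> $ i - 1)" using ent by simp
    also have "\<dots> = 2 * real Q - real M"
      using F(3) by (simp add: sum_subtractf sum_distrib_left[symmetric])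
    finally show ?thesis .
  qed
  show ?thesis unfolding sdp1_feasible_def using F herm tr sm dg psd ent by simp
qed

theorem claim: "lemma2p1_claim TYPE('a::{conjugatable_ordered_field,real_algebra_1})"
  unfolding lemma2p1_claim_def
proof (intro allI impI conjI)
  fix N M Q \<epsilon> and H :: "nat \<Rightarrow> 'a mat" and X1 X2
  assume "sdp1_optimal N M Q \<epsilon> H X1 X2"
  then have f: "sdp1_feasible N M Q \<epsilon> H X1 X2"
    and o: "\<forall>Y1 Y2. sdp1_feasible N M Q \<epsilon> H Y1 Y2 \<longrightarrow> mtrace X2 \<le> mtrace Y2"
    unfolding sdp1_optimal_def by auto
  show "sdp2_optimal N M Q \<epsilon> H (vec M (\<lambda>i. 1/2 + 1/2 * X1 $$ (i, M))) X2"
    unfolding sdp2_optimal_def using fwd[OF f] o bwd by blast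
next
  fix N M Q \<epsilon> and H :: "nat \<Rightarrow> 'a mat" and \<beta> X2
  assume "sdp2_optimal N M Q \<epsilon> H \<beta> X2"
  then have f: "sdp2_feasible N M Q \<epsilon> H \<beta> X2"
    and o: "\<forall>\<gamma> Y2. sdp2_feasible N M Q \<epsilon> H \<gamma> Y2 \<longrightarrow> mtrace X2 \<le> mtrace Y2"
    unfolding sdp2_optimal_def by auto
  show "\<exists>X1. hermitian_mat (M + 1) X1 \<and> (\<forall>i<M. X1 $$ (i, M) = 2 * \<beta> $ i - 1) \<and>
               sdp1_optimal N M Q \<epsilon> H X1 X2"
    unfolding sdp1_optimal_def using bwd[OF f] o fwd by blast
qed

theorem lemma2p1:
  shows "lemma2p1_claim TYPE(real) \<and> lemma2p1_claim TYPE(complex)"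
  using claim[where 'a=real] claim[where 'a=complex] by simp

end
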